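(* Let $d\geq1$, $T\geq2$, and let $x^0,x^1\in(\mathbb{R}^d)^T$ satisfy $x^0_{t,j}\neq x^1_{t,j}$ for all $t,j$. For $1\le t\le T$ let $\mathcal{E}_t:=(\{0,1\}^d)^t$ and for $\vec\varepsilon_t=(\varepsilon_{s,j})_{s\le t,\,j\le d}\in\mathcal{E}_t$ let $x^{\vec\varepsilon_t}:=(x^{\varepsilon_{s,j}}_{s,j})_{s\le t,\,j\le d}$; let $D:=\{x^{\vec\varepsilon_T}:\vec\varepsilon_T\in\mathcal{E}_T\}$. Consider the real variables $u_{t,j}(\vec\varepsilon_t)$ for $1\le t\le T-1$, $1\le j\le d$, $\vec\varepsilon_t\in\mathcal{E}_t$, together with $w_1^0,w_1^1$ and $w_j^1$ for $2\le j\le d$ (a total of $d\sum_{t=1}^{T-1}2^{dt}+d+1$ variables), and the linear map $L_T$ sending them to the vector indexed by $\vec\varepsilon_T\in\mathcal{E}_T$ with entries $\sum_{t=1}^{T-1}\sum_{j=1}^d u_{t,j}(\vec\varepsilon_t)\,(x^{\varepsilon_{t+1,j}}_{t+1,j}-x^{\varepsilon_{t,j}}_{t,j})+w_1^{\varepsilon_{T,1}}+\sum_{j=2}^d \varepsilon_{T,j}\,w_j^1,$ where $\vec\varepsilon_t$ denotes the truncation of $\vec\varepsilon_T$ to its first $t$ blocks. Then the matrix of $L_T$ (with respect to any ordering of rows and columns) has full column rank, i.e. $L_T$ is injective.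
   Context: This linear map encodes the evaluation on the cuboid $D$ of $V=\sum_{t=1}^{T-1}\sum_{j=1}^d\hat h_{t,j}(x_1,\dots,x_t)(x_{t+1,j}-x_{t,j})+\sum_{j=1}^d\hat g_j(x_{T,j})$ under the normalization $\hat g_j(x^0_{T,j})=0$ for $j\ge2$, with $u_{t,j}(\vec\varepsilon_t)=\hat h_{t,j}(x^{\vec\varepsilon_t})$, $w_1^k=\hat g_1(x^k_{T,1})$, $w^1_j=\hat g_j(x^1_{T,j})$. *)

theory Defs
  imports "HOL-Analysis.Analysis"
begin

text \<open>Indices: times s in {1..T}, coordinates j in {1..d}. A point of (R^d)^T is a
  function nat => nat => real (only the values on {1..T} x {1..d} matter).
  A sign pattern eps in E_t = ({0,1}^d)^t is a function nat => nat => nat with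
  values in {0,1} on {1..t} x {1..d} and value 0 elsewhere (extensional).\<close>

definition Eset :: "nat \<Rightarrow> nat \<Rightarrow> (nat \<Rightarrow> nat \<Rightarrow> nat) set" where
  "Eset d t = {e. (\<forall>s j. e s j \<in> {0,1}) \<and>
                   (\<forall>s j. \<not> (s \<in> {1..t} \<and> j \<in> {1..d}) \<longrightarrow> e s j = 0)}"

definition trunc :: "nat \<Rightarrow> (nat \<Rightarrow> nat \<Rightarrow> nat) \<Rightarrow> (nat \<Rightarrow> nat \<Rightarrow> nat)" where
  "trunc t e = (\<lambda>s j. if s \<le> t then e s j else 0)"

definition xsel :: "(nat \<Rightarrow> nat \<Rightarrow> real) \<Rightarrow> (nat \<Rightarrow> nat \<Rightarrow> real) \<Rightarrow>
                    (nat \<Rightarrow> nat \<Rightarrow> nat) \<Rightarrow> nat \<Rightarrow> nat \<Rightarrow> real" where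
  "xsel x0 x1 e s j = (if e s j = 0 then x0 s j else x1 s j)"

text \<open>The linear map L_T, evaluated at the row indexed by eps in E_T.
  Variables: u t j eps = u_{t,j}(eps); w0 = w_1^0; w1 j = w_j^1 (j = 1..d).\<close>
definition LT :: "nat \<Rightarrow> nat \<Rightarrow> (nat \<Rightarrow> nat \<Rightarrow> real) \<Rightarrow> (nat \<Rightarrow> nat \<Rightarrow> real) \<Rightarrow>
    (nat \<Rightarrow> nat \<Rightarrow> (nat \<Rightarrow> nat \<Rightarrow> nat) \<Rightarrow> real) \<Rightarrow> real \<Rightarrow> (nat \<Rightarrow> real) \<Rightarrow>
    (nat \<Rightarrow> nat \<Rightarrow> nat) \<Rightarrow> real" where
  "LT d T x0 x1 u w0 w1 e =
     (\<Sum>t = 1..T-1. \<Sum>j = 1..d. u t j (trunc t e) *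
         (xsel x0 x1 e (t+1) j - xsel x0 x1 e t j))
     + (if e T 1 = 0 then w0 else w1 1)
     + (\<Sum>j = 2..d. real (e T j) * w1 j)"

end

theory Submission
  imports Defs
begin

definition SS :: "nat \<Rightarrow> nat \<Rightarrow> (nat \<Rightarrow> nat \<Rightarrow> real) \<Rightarrow> (nat \<Rightarrow> nat \<Rightarrow> real) \<Rightarrow>
    (nat \<Rightarrow> nat \<Rightarrow> (nat \<Rightarrow> nat \<Rightarrow> nat) \<Rightarrow> real) \<Rightarrow> (nat \<Rightarrow> nat \<Rightarrow> nat) \<Rightarrow> real" where
  "SS d T x0 x1 u e = (\<Sum>t = 1..T-1. \<Sum>j = 1..d. u t j (trunc t e) *
         (xsel x0 x1 e (t+1) j - xsel x0 x1 e t j))"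

lemma separable:
  fixes phi :: "nat \<Rightarrow> nat \<Rightarrow> real"
  assumes fin: "finite J"
    and H: "\<And>b. (\<forall>j. b j \<in> {0,1}) \<Longrightarrow> C + (\<Sum>j\<in>J. phi j (b j)) = 0"
  shows "(\<forall>j\<in>J. phi j 1 = phi j 0) \<and> C + (\<Sum>j\<in>J. phi j 0) = 0"
proof
  show "C + (\<Sum>j\<in>J. phi j 0) = 0" using H[of "\<lambda>_. 0"] by simp
  show "\<forall>j\<in>J. phi j 1 = phi j 0"
  proof
    fix j assume j: "j \<in> J"
    have a: "C + (\<Sum>k\<in>J. phi k (if k = j then 1 else 0)) = 0" using H[of "\<lambda>k. if k = j then 1 else 0"] by simp
    have b: "C + (\<Sum>k\<in>J. phi k 0) = 0" using H[of "\<lambda>_. 0"] by simp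
    have "(\<Sum>k\<in>J. phi k (if k = j then 1 else 0)) = phi j 1 + (\<Sum>k\<in>J-{j}. phi k (if k = j then 1 else 0))"
      using sum.remove[OF fin j, of "\<lambda>k. phi k (if k = j then 1 else 0)"] by simp
    also have "(\<Sum>k\<in>J-{j}. phi k (if k = j then 1 else 0)) = (\<Sum>k\<in>J-{j}. phi k 0)"
      by (rule sum.cong) auto
    finally have c: "(\<Sum>k\<in>J. phi k (if k = j then 1 else 0)) = phi j 1 + (\<Sum>k\<in>J-{j}. phi k 0)" .
    have "(\<Sum>k\<in>J. phi k 0) = phi j 0 + (\<Sum>k\<in>J-{j}. phi k 0)"
      using sum.remove[OF fin j] by simp
    with a b c show "phi j 1 = phi j 0" by linarith
  qed
qed

definition glue :: "nat \<Rightarrow> nat \<Rightarrow> (nat \<Rightarrow> nat \<Rightarrow> nat) \<Rightarrow> (nat \<Rightarrow> nat) \<Rightarrow> (nat \<Rightarrow> nat \<Rightarrow> nat)" where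
  "glue d T f b = (\<lambda>s j. if s \<le> T then f s j else if s = T+1 \<and> j \<in> {1..d} then b j else 0)"

lemma glue_in: "f \<in> Eset d T \<Longrightarrow> (\<forall>j. b j \<in> {0,1}) \<Longrightarrow> glue d T f b \<in> Eset d (T+1)"
  unfolding Eset_def glue_def by auto

lemma trunc_glue: "f \<in> Eset d T \<Longrightarrow> trunc T (glue d T f b) = f"
  unfolding Eset_def glue_def trunc_def by (auto simp: fun_eq_iff)

lemma trunc_trunc: "t \<le> T \<Longrightarrow> trunc t (trunc T e) = trunc t e"
  unfolding trunc_def by (auto simp: fun_eq_iff)

lemma xsel_trunc: "s \<le> T \<Longrightarrow> xsel x0 x1 (trunc T e) s j = xsel x0 x1 e s j"
  unfolding trunc_def xsel_def by auto

lemma SS_trunc: "SS d T x0 x1 u (trunc T e) = SS d T x0 x1 u e"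
  unfolding SS_def
proof (intro sum.cong refl)
  fix t j assume "t \<in> {1..T-1}"
  then have "t \<le> T" "t+1 \<le> T" by auto
  then show "u t j (trunc t (trunc T e)) * (xsel x0 x1 (trunc T e) (t+1) j - xsel x0 x1 (trunc T e) t j) =
    u t j (trunc t e) * (xsel x0 x1 e (t+1) j - xsel x0 x1 e t j)"
    by (simp add: trunc_trunc xsel_trunc)
qed

lemma SS_Suc: "T \<ge> 1 \<Longrightarrow> SS d (T+1) x0 x1 u e = SS d T x0 x1 u e +
   (\<Sum>j = 1..d. u T j (trunc T e) * (xsel x0 x1 e (T+1) j - xsel x0 x1 e T j))"
proof -
  assume "T \<ge> 1"
  then have "{1..T} = insert T {1..T-1}" by auto
  moreover have "T \<notin> {1..T-1}" using \<open>T \<ge> 1\<close> by auto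
  ultimately show ?thesis unfolding SS_def by (simp add: add.commute)
qed

lemma trunc_Eset: "e \<in> Eset d t \<Longrightarrow> trunc t e = e"
  unfolding Eset_def trunc_def by (auto simp: fun_eq_iff)

lemma zero_Eset: "(\<lambda>_ _. 0) \<in> Eset d T"
  unfolding Eset_def by auto

lemma main:
  assumes "T \<ge> 1"
  shows "\<And>u g. (\<forall>t\<in>{1..T}. \<forall>j\<in>{1..d}. x0 t j \<noteq> x1 t j) \<Longrightarrow>
    (\<forall>e\<in>Eset d T. SS d T x0 x1 u e + (\<Sum>j=1..d. g j (e T j)) = 0) \<Longrightarrow>
    (\<forall>t\<in>{1..T-1}. \<forall>j\<in>{1..d}. \<forall>e\<in>Eset d t. u t j e = 0) \<and>
    (\<forall>j\<in>{1..d}. g j 1 = g j 0) \<and> (\<Sum>j=1..d. g j 0) = 0"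
  using assms
proof (induction T rule: nat_induct_at_least)
  case base
  fix u and g :: "nat \<Rightarrow> nat \<Rightarrow> real"
  assume H: "\<forall>e\<in>Eset d 1. SS d 1 x0 x1 u e + (\<Sum>j=1..d. g j (e 1 j)) = 0"
  have "(\<forall>j\<in>{1..d}. g j 1 = g j 0) \<and> 0 + (\<Sum>j=1..d. g j 0) = 0"
  proof (rule separable)
    fix b :: "nat \<Rightarrow> nat" assume b: "\<forall>j. b j \<in> {0,1}"
    have e: "glue d 0 (\<lambda>_ _. 0) b \<in> Eset d 1" using glue_in[OF zero_Eset b] by simp
    have "SS d 1 x0 x1 u e = 0" for e unfolding SS_def by simp
    moreover have "(\<Sum>j=1..d. g j (glue d 0 (\<lambda>_ _. 0) b 1 j)) = (\<Sum>j=1..d. g j (b j))"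
      by (rule sum.cong) (auto simp: glue_def)
    ultimately show "0 + (\<Sum>j=1..d. g j (b j)) = 0" using H e by auto
  qed simp
  then show "(\<forall>t\<in>{1..1-1}. \<forall>j\<in>{1..d}. \<forall>e\<in>Eset d t. u t j e = 0) \<and>
    (\<forall>j\<in>{1..d}. g j 1 = g j 0) \<and> (\<Sum>j=1..d. g j 0) = 0" by simp
next
  case (Suc n)
  fix u and g :: "nat \<Rightarrow> nat \<Rightarrow> real"
  assume dist: "\<forall>t\<in>{1..Suc n}. \<forall>j\<in>{1..d}. x0 t j \<noteq> x1 t j"
  assume H: "\<forall>e\<in>Eset d (Suc n). SS d (Suc n) x0 x1 u e + (\<Sum>j=1..d. g j (e (Suc n) j)) = 0"
  define phi where "phi f j b = u n j f * (if b = 0 then x0 (n+1) j else x1 (n+1) j) + g j b" for f j and b :: nat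
  define C where "C f = SS d n x0 x1 u f - (\<Sum>j=1..d. u n j f * xsel x0 x1 f n j)" for f
  have R: "(\<forall>j\<in>{1..d}. phi f j 1 = phi f j 0) \<and> C f + (\<Sum>j=1..d. phi f j 0) = 0"
    if f: "f \<in> Eset d n" for f
  proof (rule separable)
    fix b :: "nat \<Rightarrow> nat" assume b: "\<forall>j. b j \<in> {0,1}"
    define e where "e = glue d n f b"
    have eE: "e \<in> Eset d (n+1)" unfolding e_def using glue_in[OF f b] .
    have te: "trunc n e = f" unfolding e_def using trunc_glue[OF f] .
    have "SS d n x0 x1 u e = SS d n x0 x1 u f" using SS_trunc[of d n x0 x1 u e] te by simp
    moreover have "(\<Sum>j = 1..d. u n j (trunc n e) * (xsel x0 x1 e (n+1) j - xsel x0 x1 e n j))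
       = (\<Sum>j = 1..d. u n j f * (if b j = 0 then x0 (n+1) j else x1 (n+1) j) - u n j f * xsel x0 x1 f n j)"
      unfolding te by (rule sum.cong) (auto simp: e_def glue_def xsel_def algebra_simps)
    moreover have "(\<Sum>j=1..d. g j (e (Suc n) j)) = (\<Sum>j=1..d. g j (b j))"
      by (rule sum.cong) (auto simp: e_def glue_def)
    ultimately have "SS d (Suc n) x0 x1 u e + (\<Sum>j=1..d. g j (e (Suc n) j)) =
       C f + (\<Sum>j=1..d. phi f j (b j))"
      using SS_Suc[OF Suc.hyps(1), of d x0 x1 u e]
      by (simp add: C_def phi_def sum.distrib sum_subtractf)
    then show "C f + (\<Sum>j=1..d. phi f j (b j)) = 0" using H eE by simp
  qed simp
  define c where "c j = (g j 0 - g j 1) / (x1 (n+1) j - x0 (n+1) j)" for j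
  have uc: "u n j f = c j" if f: "f \<in> Eset d n" and j: "j \<in> {1..d}" for f j
  proof -
    have "x0 (Suc n) j \<noteq> x1 (Suc n) j" using dist j by auto
    then have ne: "x1 (n+1) j - x0 (n+1) j \<noteq> 0" by simp
    have "phi f j 1 = phi f j 0" using R[OF f] j by auto
    then have "u n j f * (x1 (n+1) j - x0 (n+1) j) = g j 0 - g j 1"
      unfolding phi_def by (simp add: algebra_simps)
    then show ?thesis unfolding c_def using ne by (simp add: field_simps)
  qed
  define g' where "g' j b = c j * x0 (n+1) j + g j 0 - c j * (if b = 0 then x0 n j else x1 n j)" for j and b :: nat
  have H': "\<forall>e\<in>Eset d n. SS d n x0 x1 u e + (\<Sum>j=1..d. g' j (e n j)) = 0"
  proof
    fix f assume f: "f \<in> Eset d n"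
    have "SS d n x0 x1 u f + (\<Sum>j=1..d. g' j (f n j)) = C f + (\<Sum>j=1..d. phi f j 0)"
    proof -
      have "(\<Sum>j=1..d. g' j (f n j)) = (\<Sum>j=1..d. phi f j 0 - u n j f * xsel x0 x1 f n j)"
        by (rule sum.cong) (auto simp: g'_def phi_def xsel_def uc[OF f])
      then show ?thesis by (simp add: C_def sum_subtractf)
    qed
    then show "SS d n x0 x1 u f + (\<Sum>j=1..d. g' j (f n j)) = 0" using R[OF f] by simp
  qed
  have dist': "\<forall>t\<in>{1..n}. \<forall>j\<in>{1..d}. x0 t j \<noteq> x1 t j" using dist by auto
  have IH: "(\<forall>t\<in>{1..n-1}. \<forall>j\<in>{1..d}. \<forall>e\<in>Eset d t. u t j e = 0) \<and>
    (\<forall>j\<in>{1..d}. g' j 1 = g' j 0) \<and> (\<Sum>j=1..d. g' j 0) = 0"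
    using Suc.IH[OF dist' H'] .
  have c0: "c j = 0" if j: "j \<in> {1..d}" for j
  proof -
    have "g' j 1 = g' j 0" using IH j by auto
    then have "c j * (x1 n j - x0 n j) = 0" unfolding g'_def by (auto simp: algebra_simps)
    moreover have "x0 n j \<noteq> x1 n j" using dist j Suc.hyps(1) by auto
    then have "x1 n j - x0 n j \<noteq> 0" by simp
    ultimately show ?thesis by simp
  qed
  have U: "\<forall>t\<in>{1..Suc n-1}. \<forall>j\<in>{1..d}. \<forall>e\<in>Eset d t. u t j e = 0"
  proof (intro ballI)
    fix t j e assume t: "t \<in> {1..Suc n - 1}" and j: "j \<in> {1..d}" and e: "e \<in> Eset d t"
    show "u t j e = 0"
    proof (cases "t = n")
      case True then show ?thesis using uc[of e j] c0[OF j] e j by simp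
    next
      case False then have "t \<in> {1..n-1}" using t by auto
      then show ?thesis using IH j e by blast
    qed
  qed
  have G: "\<forall>j\<in>{1..d}. g j 1 = g j 0"
  proof
    fix j assume j: "j \<in> {1..d}"
    have "phi (\<lambda>_ _. 0) j 1 = phi (\<lambda>_ _. 0) j 0" using R[OF zero_Eset] j by auto
    moreover have "u n j (\<lambda>_ _. 0) = 0" using uc[OF zero_Eset j] c0[OF j] by simp
    ultimately show "g j 1 = g j 0" unfolding phi_def by simp
  qed
  have "(\<Sum>j=1..d. g j 0) = (\<Sum>j=1..d. g' j 0)"
    by (rule sum.cong) (auto simp: g'_def c0)
  then have "(\<Sum>j=1..d. g j 0) = 0" using IH by simp
  with U G show "(\<forall>t\<in>{1..Suc n-1}. \<forall>j\<in>{1..d}. \<forall>e\<in>Eset d t. u t j e = 0) \<and>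
    (\<forall>j\<in>{1..d}. g j 1 = g j 0) \<and> (\<Sum>j=1..d. g j 0) = 0" by blast
qed

theorem lemma4p1:
  fixes d T :: nat and x0 x1 :: "nat \<Rightarrow> nat \<Rightarrow> real"
    and u u' :: "nat \<Rightarrow> nat \<Rightarrow> (nat \<Rightarrow> nat \<Rightarrow> nat) \<Rightarrow> real"
    and w0 w0' :: real and w1 w1' :: "nat \<Rightarrow> real"
  assumes "d \<ge> 1" and "T \<ge> 2"
    and "\<And>t j. t \<in> {1..T} \<Longrightarrow> j \<in> {1..d} \<Longrightarrow> x0 t j \<noteq> x1 t j"
    and "\<And>e. e \<in> Eset d T \<Longrightarrow> LT d T x0 x1 u w0 w1 e = LT d T x0 x1 u' w0' w1' e"
  shows "(\<forall>t \<in> {1..T-1}. \<forall>j \<in> {1..d}. \<forall>e \<in> Eset d t. u t j e = u' t j e)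
         \<and> w0 = w0' \<and> (\<forall>j \<in> {1..d}. w1 j = w1' j)"
proof -
  define U where "U t j e = u t j e - u' t j e" for t j e
  define G where "G j b = (if j = 1 then (if b = 0 then w0 - w0' else w1 1 - w1' 1)
      else real b * (w1 j - w1' j))" for j and b :: nat
  have H: "\<forall>e\<in>Eset d T. SS d T x0 x1 U e + (\<Sum>j=1..d. G j (e T j)) = 0"
  proof
    fix e assume e: "e \<in> Eset d T"
    have "LT d T x0 x1 u w0 w1 e - LT d T x0 x1 u' w0' w1' e = 0" using assms(4)[OF e] by simp
    moreover have "SS d T x0 x1 U e = SS d T x0 x1 u e - SS d T x0 x1 u' e"
      unfolding SS_def U_def by (simp add: sum_subtractf[symmetric] algebra_simps)
    moreover have "(\<Sum>j=1..d. G j (e T j)) = G 1 (e T 1) + (\<Sum>j=2..d. G j (e T j))"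
      using sum.atLeast_Suc_atMost[OF assms(1), of "\<lambda>j. G j (e T j)"] by (simp add: numeral_2_eq_2)
    moreover have "(\<Sum>j=2..d. G j (e T j)) = (\<Sum>j=2..d. real (e T j) * w1 j) - (\<Sum>j=2..d. real (e T j) * w1' j)"
      unfolding sum_subtractf[symmetric] by (rule sum.cong) (auto simp: G_def algebra_simps)
    ultimately show "SS d T x0 x1 U e + (\<Sum>j=1..d. G j (e T j)) = 0"
      unfolding LT_def SS_def[symmetric] by (cases "e T 1 = 0") (simp_all add: G_def)
  qed
  have dist: "\<forall>t\<in>{1..T}. \<forall>j\<in>{1..d}. x0 t j \<noteq> x1 t j" using assms(3) by blast
  have M: "(\<forall>t\<in>{1..T-1}. \<forall>j\<in>{1..d}. \<forall>e\<in>Eset d t. U t j e = 0) \<and>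
    (\<forall>j\<in>{1..d}. G j 1 = G j 0) \<and> (\<Sum>j=1..d. G j 0) = 0"
    using main[of T d x0 x1 U G] assms(2) dist H by simp
  have "(\<Sum>j=1..d. G j 0) = G 1 0 + (\<Sum>j=2..d. G j 0)"
    using sum.atLeast_Suc_atMost[OF assms(1), of "\<lambda>j. G j 0"] by (simp add: numeral_2_eq_2)
  moreover have "(\<Sum>j=2..d. G j 0) = 0" by (rule sum.neutral) (auto simp: G_def)
  ultimately have w0: "w0 = w0'" using M by (simp add: G_def)
  have "G 1 1 = G 1 0" using M assms(1) by auto
  then have w11: "w1 1 = w1' 1" using w0 by (simp add: G_def)
  have W: "w1 j = w1' j" if j: "j \<in> {1..d}" for j
  proof (cases "j = 1")
    case True then show ?thesis using w11 by simp
  next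
    case False
    have "G j 1 = G j 0" using M j by auto
    then show ?thesis using False by (simp add: G_def)
  qed
  show ?thesis using M w0 W unfolding U_def by auto
qed

end
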